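(* Fix any total budget $\mathrm{TB}\in\mathbb N_0$ and let $G$ be a number game. Then $G\ge 0$ if and only if $o(G,0)=\mathrm L$.
   Context: Game forms are defined recursively: $G=\{G^{\mathcal L}\mid G^{\mathcal R}\}$ with finite sets of Left and Right options, and finite birthday. $0=\{\varnothing\mid\varnothing\}$. Fix a total budget $\mathrm{TB}\in\mathbb N_0$. The budget set is $\mathcal B=\{0,\dots,\mathrm{TB},\hat 0,\dots,\widehat{\mathrm{TB}}\}$: state $p$ (resp. $\hat p$) means Left holds $p$ dollars and Right holds $\mathrm{TB}-p$, and Right (resp. Left) holds the tie-breaking marker. Play of $(G,\tilde p)$: at every position (terminal ones included) both players bid simultaneously, Left $\ell\in\{0,\dots,p\}$, Right $r\in\{0,\dots,\mathrm{TB}-p\}$. If Left holds the marker (state $\hat p$): if $\ell>r$ Left moves to $(G^L,\widehat{p-\ell})$, or, including the marker (allowed when $\ell\ge r$), to $(G^L,p-\ell)$; if $\ell=r$ Left wins, the marker passes to Right, play continues at $(G^L,p-\ell)$; if $\ell<r$ Right moves to $(G^R,\widehat{p+r})$. Symmetrically when Right holds the marker (state $p$): if $r>\ell$ Right moves to $(G^R,p+r)$ or, including the marker, to $(G^R,\widehat{p+r})$; if $r=\ell$ Right wins, the marker passes to Left, play continues at $(G^R,\widehat{p+r})$; if $r<\ell$ Left moves to $(G^L,p-\ell)$. A player who wins a bid but has no option loses. $o(G,\tilde p)\in\{\mathrm L,\mathrm R\}$ is the winner under optimal play; $\mathrm L>\mathrm R$. Disjunctive sum $G+H=\{G^{\mathcal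 L}+H,G+H^{\mathcal L}\mid G^{\mathcal R}+H,G+H^{\mathcal R}\}$. $G\ge H$ means $o(G+X,\tilde p)\ge o(H+X,\tilde p)$ for all game forms $X$ and all $\tilde p\in\mathcal B$; $G>H$ means $G\ge H$ and not $H\ge G$; $G<H$ means $H>G$. A game form $G$ is a number (for the fixed $\mathrm{TB}$) if all its options are numbers and $G^L<G<G^R$ for every $G^L\in G^{\mathcal L}$, $G^R\in G^{\mathcal R}$. *)

theory Defs
  imports Main "HOL-Library.FSet"
begin

datatype game = Game (lopts: "game fset") (ropts: "game fset")

definition zero_game :: game where
  "zero_game = Game {||} {||}"

text \<open>A state is a pair (p, m): Left holds p dollars, Right holds TB - p dollars,
and m = True means Left holds the tie-breaking marker (the state written p-hat),
m = False means Right holds the marker (the state written p).\<close>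
type_synonym bstate = "nat \<times> bool"

definition budgets :: "nat \<Rightarrow> bstate set" where
  "budgets TB = {(p, m). p \<le> TB}"

text \<open>FL / FR are the outcome functions (True = Left wins)
of the Left / Right options. lwin_bid TB FL FR (p,m) l r says: after Left bids l
and Right bids r, under optimal continuation, Left wins.\<close>
definition lwin_bid ::
  "nat \<Rightarrow> (bstate \<Rightarrow> bool) fset \<Rightarrow> (bstate \<Rightarrow> bool) fset \<Rightarrow> bstate \<Rightarrow> nat \<Rightarrow> nat \<Rightarrow> bool" where
  "lwin_bid TB FL FR s l r =
     (let p = fst s; m = snd s in
      if m then
        (if r < l then (\<exists>f. f |\<in>| FL \<and> (f (p - l, True) \<or> f (p - l, False)))
         else if l = r then (\<exists>f. f |\<in>| FL \<and> f (p - l, False))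
         else (\<forall>f. f |\<in>| FR \<longrightarrow> f (p + r, True)))
      else
        (if l < r then (\<forall>f. f |\<in>| FR \<longrightarrow> (f (p + r, False) \<and> f (p + r, True)))
         else if l = r then (\<forall>f. f |\<in>| FR \<longrightarrow> f (p + r, True))
         else (\<exists>f. f |\<in>| FL \<and> f (p - l, False))))"

definition lwins_step ::
  "nat \<Rightarrow> (bstate \<Rightarrow> bool) fset \<Rightarrow> (bstate \<Rightarrow> bool) fset \<Rightarrow> bstate \<Rightarrow> bool" where
  "lwins_step TB FL FR s =
     (\<exists>l \<le> fst s. \<forall>r \<le> TB - fst s. lwin_bid TB FL FR s l r)"

text \<open>outcome TB G s = True means o(G,s) = L, False means o(G,s) = R.\<close>
primrec outcome :: "nat \<Rightarrow> game \<Rightarrow> bstate \<Rightarrow> bool" where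
  "outcome TB (Game L R) = lwins_step TB (fimage (outcome TB) L) (fimage (outcome TB) R)"

primrec sum_aux ::
  "(game \<Rightarrow> game) fset \<Rightarrow> (game \<Rightarrow> game) fset \<Rightarrow> game \<Rightarrow> game" where
  "sum_aux SL SR (Game HL HR) =
     Game (fimage (\<lambda>s. s (Game HL HR)) SL |\<union>| fimage (sum_aux SL SR) HL)
          (fimage (\<lambda>s. s (Game HL HR)) SR |\<union>| fimage (sum_aux SL SR) HR)"

text \<open>gsum G H = G + H: the Left options are G^L + H and G + H^L, etc.\<close>
primrec gsum :: "game \<Rightarrow> game \<Rightarrow> game" where
  "gsum (Game GL GR) = sum_aux (fimage gsum GL) (fimage gsum GR)"

definition game_ge :: "nat \<Rightarrow> game \<Rightarrow> game \<Rightarrow> bool" where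
  "game_ge TB G H =
     (\<forall>X. \<forall>s \<in> budgets TB. outcome TB (gsum H X) s \<longrightarrow> outcome TB (gsum G X) s)"

definition game_gt :: "nat \<Rightarrow> game \<Rightarrow> game \<Rightarrow> bool" where
  "game_gt TB G H = (game_ge TB G H \<and> \<not> game_ge TB H G)"

inductive is_number :: "nat \<Rightarrow> game \<Rightarrow> bool" for TB where
  "(\<And>x. x |\<in>| L \<Longrightarrow> is_number TB x) \<Longrightarrow>
   (\<And>x. x |\<in>| R \<Longrightarrow> is_number TB x) \<Longrightarrow>
   (\<And>x. x |\<in>| L \<Longrightarrow> game_gt TB (Game L R) x) \<Longrightarrow>
   (\<And>y. y |\<in>| R \<Longrightarrow> game_gt TB y (Game L R)) \<Longrightarrow>
   is_number TB (Game L R)"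

lemma gsum_eq:
  "gsum (Game GL GR) (Game HL HR) =
     Game (fimage (\<lambda>g. gsum g (Game HL HR)) GL |\<union>| fimage (gsum (Game GL GR)) HL)
          (fimage (\<lambda>g. gsum g (Game HL HR)) GR |\<union>| fimage (gsum (Game GL GR)) HR)"
  by (simp add: fset.map_comp comp_def)

end

theory Submission
  imports Defs
begin

lemma game_induct2:
  assumes "\<And>G. (\<And>x. x |\<in>| lopts G \<Longrightarrow> P x) \<Longrightarrow> (\<And>x. x |\<in>| ropts G \<Longrightarrow> P x) \<Longrightarrow> P G"
  shows "P G"
proof (induction G rule: game.induct)
  case (Game L R)
  then show ?case using assms[of "Game L R"] by simp
qed

lemma outcome_unf:
  "outcome TB G s = lwins_step TB (outcome TB |`| lopts G) (outcome TB |`| ropts G) s"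
  by (cases G) simp

definition LW :: "nat \<Rightarrow> game \<Rightarrow> nat \<Rightarrow> bool \<Rightarrow> nat \<Rightarrow> nat \<Rightarrow> bool" where
  "LW TB G p m l r = lwin_bid TB (outcome TB |`| lopts G) (outcome TB |`| ropts G) (p, m) l r"

lemma outcome_iff:
  "outcome TB G (p, m) = (\<exists>l\<le>p. \<forall>r\<le>TB - p. LW TB G p m l r)"
  by (simp add: outcome_unf lwins_step_def LW_def)

lemma LW_T:
  "LW TB G p True l r = (if r < l then (\<exists>x. x |\<in>| lopts G \<and> (outcome TB x (p-l,True) \<or> outcome TB x (p-l,False)))
     else if l = r then (\<exists>x. x |\<in>| lopts G \<and> outcome TB x (p-l,False))
     else (\<forall>x. x |\<in>| ropts G \<longrightarrow> outcome TB x (p+r,True)))"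
  by (auto simp: LW_def lwin_bid_def Let_def)

lemma LW_F:
  "LW TB G p False l r = (if l < r then (\<forall>x. x |\<in>| ropts G \<longrightarrow> outcome TB x (p+r,False) \<and> outcome TB x (p+r,True))
     else if l = r then (\<forall>x. x |\<in>| ropts G \<longrightarrow> outcome TB x (p+r,True))
     else (\<exists>x. x |\<in>| lopts G \<and> outcome TB x (p-l,False)))"
  by (auto simp: LW_def lwin_bid_def Let_def)

lemma lopts_gsum: "lopts (gsum G X) = (\<lambda>g. gsum g X) |`| lopts G |\<union>| gsum G |`| lopts X"
  by (cases G; cases X) (simp only: gsum_eq game.sel)

lemma ropts_gsum: "ropts (gsum G X) = (\<lambda>g. gsum g X) |`| ropts G |\<union>| gsum G |`| ropts X"
  by (cases G; cases X) (simp only: gsum_eq game.sel)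

lemma gsum_zero_left: "gsum zero_game X = X"
proof -
  have "sum_aux {||} {||} X = X" by (induction X rule: game.induct) (auto intro: fset.map_ident_strong)
  then show ?thesis by (simp add: zero_game_def)
qed

lemma gsum_zero_right: "gsum G zero_game = G"
proof (induction G rule: game.induct)
  case (Game L R)
  then show ?case by (simp add: zero_game_def gsum_eq[of L R "{||}" "{||}", folded zero_game_def] fset.map_ident_strong)
qed

definition MP :: "nat \<Rightarrow> game \<Rightarrow> bool" where
  "MP TB X = ((\<forall>p. p + 1 \<le> TB \<longrightarrow> outcome TB X (p,False) \<longrightarrow> outcome TB X (Suc p,False)) \<and>
    (\<forall>p. p + 1 \<le> TB \<longrightarrow> outcome TB X (p,True) \<longrightarrow> outcome TB X (Suc p,False) \<and> outcome TB X (Suc p,True)))"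

lemma MP_all: "MP TB X"
proof (induction X rule: game_induct2)
  case (1 G)
  have F: "\<And>x p. x |\<in>| lopts G \<or> x |\<in>| ropts G \<Longrightarrow> p + 1 \<le> TB \<Longrightarrow> outcome TB x (p,False) \<Longrightarrow> outcome TB x (Suc p,False)"
    using 1 unfolding MP_def by blast
  have T: "\<And>x p. x |\<in>| lopts G \<or> x |\<in>| ropts G \<Longrightarrow> p + 1 \<le> TB \<Longrightarrow> outcome TB x (p,True) \<Longrightarrow> outcome TB x (Suc p,False) \<and> outcome TB x (Suc p,True)"
    using 1 unfolding MP_def by blast
  have M0: "outcome TB G (Suc p,False)" if pr: "p + 1 \<le> TB" "outcome TB G (p,False)" for p
  proof -
    obtain l where l: "l \<le> p" "\<forall>r\<le>TB - p. LW TB G p False l r" using pr(2) outcome_iff by blast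
    have "\<forall>r\<le>TB - Suc p. LW TB G (Suc p) False l r"
    proof (intro allI impI)
      fix r assume r: "r \<le> TB - Suc p"
      then have h: "LW TB G p False l r" using l by auto
      have b: "Suc (p + r) \<le> TB" using r pr(1) by linarith
      consider "l < r" | "l = r" | "r < l" by linarith
      then show "LW TB G (Suc p) False l r"
      proof cases
        case 1
        then show ?thesis using h b F[of _ "p+r"] T[of _ "p+r"] by (auto simp: LW_F)
      next
        case 2
        then show ?thesis using h b T[of _ "p+r"] by (auto simp: LW_F)
      next
        case 3
        then show ?thesis using h r l pr(1) F[of _ "p-l"] by (auto simp: LW_F Suc_diff_le)
      qed
    qed
    then show ?thesis using l outcome_iff by (meson le_SucI)
  qed
  have M1a: "outcome TB G (Suc p,True)" if pr: "p + 1 \<le> TB" "outcome TB G (p,True)" for p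
  proof -
    obtain l where l: "l \<le> p" "\<forall>r\<le>TB - p. LW TB G p True l r" using pr(2) outcome_iff by blast
    have "\<forall>r\<le>TB - Suc p. LW TB G (Suc p) True l r"
    proof (intro allI impI)
      fix r assume r: "r \<le> TB - Suc p"
      then have h: "LW TB G p True l r" using l by auto
      have b: "Suc (p + r) \<le> TB" using r pr(1) by linarith
      consider "l < r" | "l = r" | "r < l" by linarith
      then show "LW TB G (Suc p) True l r"
      proof cases
        case 1
        then show ?thesis using h b T[of _ "p+r"] by (auto simp: LW_T)
      next
        case 2
        then show ?thesis using h r l pr(1) F[of _ "p-l"] by (auto simp: LW_T Suc_diff_le)
      next
        case 3
        then show ?thesis using h r l pr(1) F[of _ "p-l"] T[of _ "p-l"] by (auto simp: LW_T Suc_diff_le)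
      qed
    qed
    then show ?thesis using l outcome_iff by (meson le_SucI)
  qed
  have M1b: "outcome TB G (Suc p,False)" if pr: "p + 1 \<le> TB" "outcome TB G (p,True)" for p
  proof -
    obtain l where l: "l \<le> p" "\<forall>r\<le>TB - p. LW TB G p True l r" using pr(2) outcome_iff by blast
    show ?thesis
    proof (cases "l \<le> TB - p")
      case True
      have tie: "LW TB G p True l l" using l True by auto
      then obtain xl where xl: "xl |\<in>| lopts G" "outcome TB xl (p-l,False)" by (auto simp: LW_T)
      have "\<forall>r\<le>TB - Suc p. LW TB G (Suc p) False (Suc l) r"
      proof (intro allI impI)
        fix r assume r: "r \<le> TB - Suc p"
        have b: "Suc (p + r) \<le> TB" using r pr(1) by linarith
        consider "r < Suc l" | "r = Suc l" | "Suc l < r" by linarith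
        then show "LW TB G (Suc p) False (Suc l) r"
        proof cases
          case 1
          then show ?thesis using xl by (auto simp: LW_F)
        next
          case 2
          then have h: "LW TB G p True l r" using l r by auto
          then show ?thesis using 2 b T[of _ "p+r"] by (auto simp: LW_T LW_F)
        next
          case 3
          then have h: "LW TB G p True l r" using l r by auto
          then show ?thesis using 3 b T[of _ "p+r"] by (auto simp: LW_T LW_F)
        qed
      qed
      then show ?thesis using l outcome_iff by (metis Suc_le_mono)
    next
      case False
      have h0: "LW TB G p True l 0" using l by auto
      have lpos: "0 < l" using False by auto
      then obtain xl where xl: "xl |\<in>| lopts G" "outcome TB xl (p-l,True) \<or> outcome TB xl (p-l,False)"
        using h0 by (auto simp: LW_T)
      then have xl2: "outcome TB xl (Suc (p-l),False)" using F[of xl "p-l"] T[of xl "p-l"] pr(1) l(1) by auto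
      have "\<forall>r\<le>TB - Suc p. LW TB G (Suc p) False l r"
      proof (intro allI impI)
        fix r assume r: "r \<le> TB - Suc p"
        then have "r < l" using False by linarith
        then show "LW TB G (Suc p) False l r" using xl(1) xl2 l(1) by (auto simp: LW_F Suc_diff_le)
      qed
      then show ?thesis using l outcome_iff by (meson le_SucI)
    qed
  qed
  show ?case unfolding MP_def using M0 M1a M1b by blast
qed


lemma L2:
  assumes K0: "\<And>Y t. fst t \<le> TB \<Longrightarrow> outcome TB Y t \<Longrightarrow> outcome TB (gsum K Y) t"
  and kl: "kl |\<in>| lopts K"
  and K1: "\<And>Y t. fst t \<le> TB \<Longrightarrow> outcome TB Y t \<Longrightarrow> outcome TB (gsum kl Y) t"
  and K2: "\<And>kr Y t. kr |\<in>| ropts K \<Longrightarrow> fst t \<le> TB \<Longrightarrow> outcome TB (gsum K Y) t \<Longrightarrow> outcome TB (gsum kr Y) t"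
  and lp: "l \<le> p" "p \<le> TB"
  and W: "\<forall>r\<le>TB-p. LW TB X p m l r"
  shows "q \<le> TB \<Longrightarrow> (p + l < q \<and> (\<not>m \<or> n)) \<or> (q = p + l \<and> \<not> m \<and> n) \<Longrightarrow> outcome TB (gsum K X) (q,n)"
proof (induction "TB - q" arbitrary: q n rule: less_induct)
  case less
  define RP where "RP = (\<lambda>q n. q \<le> TB \<and> ((p + l < q \<and> (\<not>m \<or> n)) \<or> (q = p + l \<and> \<not> m \<and> n)))"
  have IH: "\<And>q' n'. RP q' n' \<Longrightarrow> q < q' \<Longrightarrow> outcome TB (gsum K X) (q',n')"
    using less unfolding RP_def by (metis diff_less_mono2 le_less_trans less_le_not_le)
  have XR: "outcome TB x (q',n')" if "RP q' n'" "x |\<in>| ropts X" for x q' n'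
  proof -
    have r: "q' - p \<le> TB - p" using that(1) unfolding RP_def by auto
    have h: "LW TB X p m l (q' - p)" using W r by auto
    show ?thesis
    proof (cases m)
      case True
      then show ?thesis using h that unfolding RP_def by (auto simp: LW_T split: if_splits)
    next
      case False
      then show ?thesis using h that unfolding RP_def by (cases n') (auto simp: LW_F split: if_splits)
    qed
  qed
  have XS: "outcome TB X (p,m)" using W lp outcome_iff by blast
  have RO: "outcome TB x (q',n')" if "x |\<in>| ropts (gsum K X)" "RP q' n'" "q < q'" for x q' n'
  proof -
    have b: "fst (q',n') \<le> TB" using that(2) unfolding RP_def by auto
    from that(1) consider (a) kr where "kr |\<in>| ropts K" "x = gsum kr X" | (b) xr where "xr |\<in>| ropts X" "x = gsum K xr"
      by (auto simp: ropts_gsum)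
    then show ?thesis
    proof cases
      case a
      then show ?thesis using K2[OF a(1) b IH[OF that(2,3)]] by simp
    next
      case b
      then show ?thesis using K0[OF _ XR[OF that(2) b(1)]] that(2) unfolding RP_def by auto
    qed
  qed
  have LO: "gsum kl X |\<in>| lopts (gsum K X)" using kl by (simp add: lopts_gsum)
  have LOk: "outcome TB (gsum kl X) t" if "fst t \<le> TB" "outcome TB X t" for t
    using K1 that by blast
  have qTB: "q \<le> TB" using less by auto
  show ?case
  proof (cases m)
    case False
    show ?thesis
    proof (cases n)
      case True
      have ql: "p + l \<le> q" using less by auto
      have "\<forall>r'\<le>TB - q. LW TB (gsum K X) q True (q - p) r'"
      proof (intro allI impI)
        fix r' assume r': "r' \<le> TB - q"
        have p1: "outcome TB (gsum kl X) (p, False)" using LOk[of "(p,False)"] XS False lp by auto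
        have qp: "q - (q - p) = p" using ql by auto
        consider "r' < q - p" | "r' = q - p" | "q - p < r'" by linarith
        then show "LW TB (gsum K X) q True (q - p) r'"
        proof cases
          case 1 then show ?thesis using LO p1 qp by (auto simp: LW_T)
        next
          case 2 then show ?thesis using LO p1 qp by (auto simp: LW_T)
        next
          case 3
          have "RP (q + r') True" unfolding RP_def using r' ql 3 qTB by auto
          moreover have "q < q + r'" using 3 by auto
          ultimately show ?thesis using 3 RO by (auto simp: LW_T)
        qed
      qed
      then have "outcome TB (gsum K X) (q, True)" unfolding outcome_iff by (meson diff_le_self)
      then show ?thesis using True by simp
    next
      case nF: False
      have ql: "p + l < q" using less nF by auto
      have "\<forall>r'\<le>TB - q. LW TB (gsum K X) q False (q - p) r'"
      proof (intro allI impI)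
        fix r' assume r': "r' \<le> TB - q"
        have p1: "outcome TB (gsum kl X) (p, False)" using LOk[of "(p,False)"] XS False lp by auto
        have qp: "q - (q - p) = p" using ql by auto
        consider "r' < q - p" | "r' = q - p" | "q - p < r'" by linarith
        then show "LW TB (gsum K X) q False (q - p) r'"
        proof cases
          case 1 then show ?thesis using LO p1 qp by (auto simp: LW_F)
        next
          case 2
          have "RP (q + r') True" unfolding RP_def using r' ql 2 qTB by auto
          moreover have "q < q + r'" using 2 ql by auto
          ultimately show ?thesis using 2 RO by (auto simp: LW_F)
        next
          case 3
          have "RP (q + r') True" "RP (q + r') False" unfolding RP_def using r' ql 3 qTB False by auto
          moreover have "q < q + r'" using 3 by auto
          ultimately show ?thesis using 3 RO by (auto simp: LW_F)
        qed
      qed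
      then have "outcome TB (gsum K X) (q, False)" unfolding outcome_iff by (meson diff_le_self)
      then show ?thesis using nF by simp
    qed
  next
    case True
    have nT: n and ql: "p + l < q" using less True by auto
    have Sp: "Suc p \<le> TB" using ql qTB by auto
    have XS1: "outcome TB X (Suc p, False)" "outcome TB X (Suc p, True)"
      using MP_all[of TB X] XS True Sp unfolding MP_def by auto
    have "\<forall>r'\<le>TB - q. LW TB (gsum K X) q True (q - Suc p) r'"
    proof (intro allI impI)
      fix r' assume r': "r' \<le> TB - q"
      have p1: "outcome TB (gsum kl X) (Suc p, False)" "outcome TB (gsum kl X) (Suc p, True)"
        using LOk XS1 Sp by auto
      have qp: "q - (q - Suc p) = Suc p" using ql by auto
      consider "r' < q - Suc p" | "r' = q - Suc p" | "q - Suc p < r'" by linarith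
      then show "LW TB (gsum K X) q True (q - Suc p) r'"
      proof cases
        case 1 then show ?thesis using LO p1 qp by (auto simp: LW_T)
      next
        case 2 then show ?thesis using LO p1 qp by (auto simp: LW_T)
      next
        case 3
        have "RP (q + r') True" unfolding RP_def using r' ql 3 qTB by auto
        moreover have "q < q + r'" using 3 by auto
        ultimately show ?thesis using 3 RO nT by (auto simp: LW_T)
      qed
    qed
    then have "outcome TB (gsum K X) (q, True)" unfolding outcome_iff by (meson diff_le_self diff_le_mono)
    then show ?thesis using nT by simp
  qed
qed


definition KP :: "nat \<Rightarrow> game \<Rightarrow> bool" where
  "KP TB K = ((\<forall>Y t. fst t \<le> TB \<longrightarrow> outcome TB Y t \<longrightarrow> outcome TB (gsum K Y) t) \<and>
    (\<exists>kl. kl |\<in>| lopts K \<and> (\<forall>Y t. fst t \<le> TB \<longrightarrow> outcome TB Y t \<longrightarrow> outcome TB (gsum kl Y) t)) \<and>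
    (\<forall>kr Y t. kr |\<in>| ropts K \<longrightarrow> fst t \<le> TB \<longrightarrow> outcome TB (gsum K Y) t \<longrightarrow> outcome TB (gsum kr Y) t))"

lemma L2': 
  assumes "KP TB K" "l \<le> p" "p \<le> TB" "\<forall>r\<le>TB-p. LW TB X p m l r"
    "q \<le> TB" "(p + l < q \<and> (\<not>m \<or> n)) \<or> (q = p + l \<and> \<not> m \<and> n)"
  shows "outcome TB (gsum K X) (q,n)"
proof -
  obtain kl where kl: "kl |\<in>| lopts K" "\<forall>Y t. fst t \<le> TB \<longrightarrow> outcome TB Y t \<longrightarrow> outcome TB (gsum kl Y) t"
    using assms(1) unfolding KP_def by blast
  show ?thesis
    apply (rule L2[of TB K kl, OF _ kl(1) _ _ assms(2,3,4,5,6)])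
    using assms(1) kl(2) unfolding KP_def by blast+
qed

lemma L1:
  assumes KPG: "\<And>g. g |\<in>| ropts G \<Longrightarrow> KP TB g"
  shows "fst s \<le> TB \<Longrightarrow> outcome TB X s \<Longrightarrow> outcome TB (gsum G X) s"
proof (induction X arbitrary: s rule: game_induct2)
  case (1 X)
  obtain p m where s: "s = (p, m)" by (cases s)
  have pTB: "p \<le> TB" using 1 s by auto
  obtain l where l: "l \<le> p" "\<forall>r\<le>TB - p. LW TB X p m l r" using 1(4) s outcome_iff by blast
  have IHL: "\<And>x t. x |\<in>| lopts X \<Longrightarrow> fst t \<le> TB \<Longrightarrow> outcome TB x t \<Longrightarrow> gsum G x |\<in>| lopts (gsum G X) \<and> outcome TB (gsum G x) t"
    using 1(1) by (auto simp: lopts_gsum)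
  have RO: "outcome TB y (p + r, n)" if "y |\<in>| ropts (gsum G X)" "r \<le> TB - p"
     "(p + l < p + r \<and> (\<not>m \<or> n)) \<or> (p + r = p + l \<and> \<not> m \<and> n)"
     "\<forall>x. x |\<in>| ropts X \<longrightarrow> outcome TB x (p + r, n)" for y r n
  proof -
    from that(1) consider (a) g where "g |\<in>| ropts G" "y = gsum g X" | (b) xr where "xr |\<in>| ropts X" "y = gsum G xr"
      by (auto simp: ropts_gsum)
    then show ?thesis
    proof cases
      case a
      then show ?thesis using L2'[OF KPG[OF a(1)] l(1) pTB l(2), of "p+r" n] that pTB by auto
    next
      case b
      then show ?thesis using 1(2)[OF b(1), of "(p+r,n)"] that pTB by auto
    qed
  qed
  have "\<forall>r\<le>TB - p. LW TB (gsum G X) p m l r"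
  proof (intro allI impI)
    fix r assume r: "r \<le> TB - p"
    have h: "LW TB X p m l r" using l r by auto
    have b1: "fst (p - l, b) \<le> TB" for b using pTB by auto
    show "LW TB (gsum G X) p m l r"
    proof (cases m)
      case True
      consider "r < l" | "r = l" | "l < r" by linarith
      then show ?thesis
      proof cases
        case 1
        then obtain x where x: "x |\<in>| lopts X" "outcome TB x (p-l,True) \<or> outcome TB x (p-l,False)"
          using h True by (auto simp: LW_T)
        then have "gsum G x |\<in>| lopts (gsum G X) \<and> (outcome TB (gsum G x) (p-l,True) \<or> outcome TB (gsum G x) (p-l,False))"
          using IHL[OF x(1) b1] by blast
        then show ?thesis using 1 True by (simp add: LW_T) blast
      next
        case 2
        then obtain x where x: "x |\<in>| lopts X" "outcome TB x (p-l,False)"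
          using h True by (auto simp: LW_T)
        then have "gsum G x |\<in>| lopts (gsum G X) \<and> outcome TB (gsum G x) (p-l,False)"
          using IHL[OF x(1) b1] by blast
        then show ?thesis using 2 True by (simp add: LW_T) blast
      next
        case 3
        then have "\<forall>x. x |\<in>| ropts X \<longrightarrow> outcome TB x (p + r, True)" using h True by (auto simp: LW_T)
        then show ?thesis using 3 True RO r by (auto simp: LW_T)
      qed
    next
      case False
      consider "r < l" | "r = l" | "l < r" by linarith
      then show ?thesis
      proof cases
        case 1
        then obtain x where x: "x |\<in>| lopts X" "outcome TB x (p-l,False)"
          using h False by (auto simp: LW_F)
        then have "gsum G x |\<in>| lopts (gsum G X) \<and> outcome TB (gsum G x) (p-l,False)"
          using IHL[OF x(1) b1] by blast
        then show ?thesis using 1 False by (simp add: LW_F) blast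
      next
        case 2
        then have "\<forall>x. x |\<in>| ropts X \<longrightarrow> outcome TB x (p + r, True)" using h False by (auto simp: LW_F)
        then show ?thesis using 2 False RO r by (auto simp: LW_F)
      next
        case 3
        then have "\<forall>x. x |\<in>| ropts X \<longrightarrow> outcome TB x (p + r, True)" 
           "\<forall>x. x |\<in>| ropts X \<longrightarrow> outcome TB x (p + r, False)" using h False by (auto simp: LW_F)
        then show ?thesis using 3 False RO[of _ r True] RO[of _ r False] r by (auto simp: LW_F)
      qed
    qed
  qed
  then show ?case using s l(1) outcome_iff by blast
qed


lemma zero_out: "outcome TB zero_game (0, False)"
  unfolding outcome_iff by (auto simp: LW_F zero_game_def)

lemma num_opts: "is_number TB G \<Longrightarrow> x |\<in>| lopts G \<or> x |\<in>| ropts G \<Longrightarrow> is_number TB x"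
  by (erule is_number.cases) auto

lemma num_gt: "is_number TB G \<Longrightarrow> y |\<in>| ropts G \<Longrightarrow> game_gt TB y G"
  by (erule is_number.cases) auto

lemma in_budgets: "t \<in> budgets TB \<longleftrightarrow> fst t \<le> TB"
  by (cases t) (simp add: budgets_def)

definition QQ :: "nat \<Rightarrow> game \<Rightarrow> bool" where
  "QQ TB G = (is_number TB G \<longrightarrow> outcome TB G (0, False) \<longrightarrow> game_ge TB G zero_game)"

lemma ge_zero_iff: "game_ge TB K zero_game \<longleftrightarrow> (\<forall>Y t. fst t \<le> TB \<longrightarrow> outcome TB Y t \<longrightarrow> outcome TB (gsum K Y) t)"
  by (auto simp: game_ge_def gsum_zero_left in_budgets)

lemma RR: "QQ TB G \<and> (\<forall>x. x |\<in>| lopts G \<or> x |\<in>| ropts G \<longrightarrow> QQ TB x)"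
proof (induction G rule: game_induct2)
  case (1 G)
  have IH: "\<And>x. x |\<in>| lopts G \<or> x |\<in>| ropts G \<Longrightarrow> QQ TB x \<and> (\<forall>y. y |\<in>| lopts x \<or> y |\<in>| ropts x \<longrightarrow> QQ TB y)"
    using 1 by blast
  have "QQ TB G" unfolding QQ_def
  proof (intro impI)
    assume num: "is_number TB G" and W: "outcome TB G (0, False)"
    have KPg: "KP TB g" if g: "g |\<in>| ropts G" for g
    proof -
      have gnum: "is_number TB g" using num_opts[OF num] g by blast
      have geg: "game_ge TB g G" using num_gt[OF num g] by (simp add: game_gt_def)
      have b0: "(0,False) \<in> budgets TB" by (simp add: budgets_def)
      have h: "\<And>X. outcome TB (gsum G X) (0,False) \<Longrightarrow> outcome TB (gsum g X) (0,False)"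
        using geg[unfolded game_ge_def, rule_format, OF b0] .
      have "outcome TB (gsum g zero_game) (0,False)"
        using h[of zero_game] W by (simp add: gsum_zero_right)
      then have Wg: "outcome TB g (0,False)" by (simp add: gsum_zero_right)
      have Qg: "QQ TB g" using IH[of g] g by blast
      have K0: "game_ge TB g zero_game" using Qg gnum Wg by (simp add: QQ_def)
      obtain l where l: "l \<le> 0" "\<forall>r\<le>TB - 0. LW TB G 0 False l r" using W unfolding outcome_iff by blast
      have l0: "l = 0" using l(1) by simp
      have "LW TB G 0 False 0 0" using l(2) l0 by simp
      then have gT: "outcome TB g (0, True)" using g by (auto simp: LW_F)
      obtain l' where l': "l' \<le> 0" "\<forall>r\<le>TB - 0. LW TB g 0 True l' r" using gT unfolding outcome_iff by blast
      have l0': "l' = 0" using l'(1) by simp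
      have "LW TB g 0 True 0 0" using l'(2) l0' by simp
      then obtain kl where kl: "kl |\<in>| lopts g" "outcome TB kl (0, False)" by (auto simp: LW_T)
      have klnum: "is_number TB kl" using num_opts[OF gnum] kl(1) by blast
      have Qkl: "QQ TB kl" using IH[of g] g kl(1) by blast
      have K1: "game_ge TB kl zero_game" using Qkl klnum kl(2) by (simp add: QQ_def)
      have K2: "game_ge TB kr g" if "kr |\<in>| ropts g" for kr
        using num_gt[OF gnum that] by (simp add: game_gt_def)
      have K2': "\<forall>kr Y t. kr |\<in>| ropts g \<longrightarrow> fst t \<le> TB \<longrightarrow> outcome TB (gsum g Y) t \<longrightarrow> outcome TB (gsum kr Y) t"
      proof (intro allI impI)
        fix kr Y t assume a: "kr |\<in>| ropts g" "fst t \<le> TB" "outcome TB (gsum g Y) t"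
        have "t \<in> budgets TB" using a(2) by (simp add: in_budgets)
        then show "outcome TB (gsum kr Y) t" using K2[OF a(1)] a(3) unfolding game_ge_def by blast
      qed
      have K0': "\<forall>Y t. fst t \<le> TB \<longrightarrow> outcome TB Y t \<longrightarrow> outcome TB (gsum g Y) t"
        using K0 unfolding ge_zero_iff by blast
      have K1': "\<forall>Y t. fst t \<le> TB \<longrightarrow> outcome TB Y t \<longrightarrow> outcome TB (gsum kl Y) t"
        using K1 unfolding ge_zero_iff by blast
      show ?thesis unfolding KP_def using K0' K1' kl(1) K2' by blast
    qed
    have "outcome TB (gsum G X) s" if "fst s \<le> TB" "outcome TB X s" for X s
      using L1[of G TB, OF KPg] that by blast
    then show "game_ge TB G zero_game" unfolding ge_zero_iff by blast
  qed
  then show ?case using IH by blast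
qed


theorem mainTheorem2:
  fixes TB :: nat and G :: game
  assumes "is_number TB G"
  shows "game_ge TB G zero_game \<longleftrightarrow> outcome TB G (0, False)"
proof
  assume ge: "game_ge TB G zero_game"
  have b0: "(0,False) \<in> budgets TB" by (simp add: budgets_def)
  have h: "\<And>X. outcome TB (gsum zero_game X) (0,False) \<Longrightarrow> outcome TB (gsum G X) (0,False)"
    using ge[unfolded game_ge_def, rule_format, OF b0] .
  show "outcome TB G (0, False)" using h[of zero_game] zero_out by (simp add: gsum_zero_right)
next
  assume "outcome TB G (0, False)"
  then show "game_ge TB G zero_game" using RR[of TB G] assms unfolding QQ_def by blast
qed

end
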